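(* Let $K$ be a division ring and $M,N\ge2$ integers. Suppose that for every group $\Gamma=\Gamma_\pi\in\bigcup_{2\le m\le M,\ 2\le n\le N}\mathrm{ULIE}^{(2)}_K(m,n)$, with its canonical generators $1=a_0,a_1,\dots,a_{m-1}$ and $1=b_0,b_1,\dots,b_{n-1}$ and with $\phi:\Gamma\to\Gamma/N_{\mathrm{tor}}(\Gamma)$ the quotient map, we have $\phi(a_i)=\phi(a_{i'})$ for some $0\le i<i'\le m-1$ or $\phi(b_j)=\phi(b_{j'})$ for some $0\le j<j'\le n-1$. Then for every torsion-free group $G$ there are no $a,b\in K[G]$ with $\operatorname{rank}(a)=M$, $\operatorname{rank}(b)=N$ and $ab=1$.
   Context: $K$ is a nonzero division ring, $K[G]$ the group ring, rank = number of group elements with nonzero coefficient. For $m,n\ge2$ and a partition $\pi$ of $S_{m,n}=\{0,\dots,m-1\}\times\{0,\dots,n-1\}$, $(i,j)\sim_\pi(i',j')$ means same block; $\Gamma_\pi$ is the group with canonical generators $a_0,\dots,a_{m-1},b_0,\dots,b_{n-1}$ and relations $a_0=b_0=1$, $a_ib_j=a_{i'}b_{j'}$ whenever $(i,j)\sim_\pi(i',j')$. $\pi$ is nondegenerate if in $\Gamma_\pi$ the $a_i$ are pairwise distinct and the $b_j$ pairwise distinct. $\pi$ is realizable with nonzero $r_0,\dots,s_{n-1}\in K$ if for each block $E$, $\sum_{(i,j)\in E}r_is_j$ equals $1$ if $(0,0)\in E$, else $0$; ordering partitions by refinement, $\pi$ is minimally realizable over $K$ if for some choice of nonzero elements of $K$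 it is minimal among partitions realizable with them. An invariant subgrid of $\pi$ is $(R,C)$ with $0\in R\subseteq\{0,\dots,m-1\}$, $0\in C\subseteq\{0,\dots,n-1\}$, $|R|,|C|\ge2$, such that $(i,j)\in R\times C$ and $(i,j)\sim_\pi(i',j')$ imply $(i',j')\in R\times C$; it is proper if $|R|<m$ or $|C|<n$. $\mathrm{ULIE}^{(2)}_K(m,n)$ is the set of $\Gamma_\pi$ with $\pi$ nondegenerate, minimally realizable over $K$, and without proper invariant subgrids. For a group $\Gamma$, $N^{(1)}_{\mathrm{tor}}(\Gamma)$ is the smallest normal subgroup containing all elements of finite order; $N_{\mathrm{tor},1}=N^{(1)}_{\mathrm{tor}}(\Gamma)$, $N_{\mathrm{tor},k+1}=\phi_k^{-1}(N^{(1)}_{\mathrm{tor}}(\Gamma/N_{\mathrm{tor},k}))$ with $\phi_k$ the quotient map $\Gamma\to\Gamma/N_{\mathrm{tor},k}$, and $N_{\mathrm{tor}}(\Gamma)=\bigcup_kN_{\mathrm{tor},k}$. *)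

theory Defs
  imports "HOL-Algebra.Coset"
begin

definition supp :: "('g \<Rightarrow> 'k::zero) \<Rightarrow> 'g set" where
  "supp a = {g. a g \<noteq> 0}"

definition group_ring :: "('g, 'm) monoid_scheme \<Rightarrow> ('g \<Rightarrow> 'k::zero) set" where
  "group_ring G = {a. finite (supp a) \<and> supp a \<subseteq> carrier G}"

definition gr_mult :: "('g, 'm) monoid_scheme \<Rightarrow> ('g \<Rightarrow> 'k::ring_1) \<Rightarrow> ('g \<Rightarrow> 'k) \<Rightarrow> 'g \<Rightarrow> 'k" where
  "gr_mult G a b = (\<lambda>g. if g \<in> carrier G
      then (\<Sum>h\<in>supp a. a h * b (inv\<^bsub>G\<^esub> h \<otimes>\<^bsub>G\<^esub> g)) else 0)"

definition gr_one :: "('g, 'm) monoid_scheme \<Rightarrow> 'g \<Rightarrow> 'k::ring_1" where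
  "gr_one G = (\<lambda>g. if g = \<one>\<^bsub>G\<^esub> then 1 else 0)"

definition gr_rank :: "('g \<Rightarrow> 'k::zero) \<Rightarrow> nat" where
  "gr_rank a = card (supp a)"

definition torsion_free :: "('g, 'm) monoid_scheme \<Rightarrow> bool" where
  "torsion_free G \<longleftrightarrow> (\<forall>x\<in>carrier G. \<forall>n::nat. n > 0 \<and> x [^]\<^bsub>G\<^esub> n = \<one>\<^bsub>G\<^esub> \<longrightarrow> x = \<one>\<^bsub>G\<^esub>)"

definition torsion_elems :: "('g, 'm) monoid_scheme \<Rightarrow> 'g set" where
  "torsion_elems G = {x \<in> carrier G. \<exists>n::nat. n > 0 \<and> x [^]\<^bsub>G\<^esub> n = \<one>\<^bsub>G\<^esub>}"

definition N1tor :: "('g, 'm) monoid_scheme \<Rightarrow> 'g set" where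
  "N1tor G = \<Inter> {H. H \<lhd> G \<and> torsion_elems G \<subseteq> H}"

text \<open>\<open>Ntor_seq G k\<close> is \<open>N_{tor,k}\<close> for \<open>k \<ge> 1\<close>; the preimage of a set of cosets under the
  quotient map \<open>G \<rightarrow> G Mod N\<close> is the union of those cosets.\<close>
fun Ntor_seq :: "('g, 'm) monoid_scheme \<Rightarrow> nat \<Rightarrow> 'g set" where
  "Ntor_seq G 0 = {\<one>\<^bsub>G\<^esub>}"
| "Ntor_seq G (Suc 0) = N1tor G"
| "Ntor_seq G (Suc (Suc k)) = \<Union> (N1tor (G Mod (Ntor_seq G (Suc k))))"

definition Ntor :: "('g, 'm) monoid_scheme \<Rightarrow> 'g set" where
  "Ntor G = (\<Union>k\<in>{1..}. Ntor_seq G k)"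

definition phi_tor :: "('g, 'm) monoid_scheme \<Rightarrow> 'g \<Rightarrow> 'g set" where
  "phi_tor G x = Ntor G #>\<^bsub>G\<^esub> x"

definition S_grid :: "nat \<Rightarrow> nat \<Rightarrow> (nat \<times> nat) set" where
  "S_grid m n = {0..<m} \<times> {0..<n}"

definition is_partition :: "nat \<Rightarrow> nat \<Rightarrow> ((nat \<times> nat) \<times> (nat \<times> nat)) set \<Rightarrow> bool" where
  "is_partition m n P \<longleftrightarrow> equiv (S_grid m n) P"

text \<open>Words over the generators: \<open>(False, Inl i)\<close> is \<open>a_i\<close>, \<open>(True, Inl i)\<close> is \<open>a_i\<^sup>-\<^sup>1\<close>,
  \<open>Inr j\<close> similarly for \<open>b_j\<close>.\<close>
type_synonym word = "(bool \<times> (nat + nat)) list"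

definition letter_ok :: "nat \<Rightarrow> nat \<Rightarrow> bool \<times> (nat + nat) \<Rightarrow> bool" where
  "letter_ok m n l = (case snd l of Inl i \<Rightarrow> i < m | Inr j \<Rightarrow> j < n)"

definition word_ok :: "nat \<Rightarrow> nat \<Rightarrow> word \<Rightarrow> bool" where
  "word_ok m n w \<longleftrightarrow> (\<forall>l\<in>set w. letter_ok m n l)"

inductive pres_eq :: "nat \<Rightarrow> nat \<Rightarrow> ((nat \<times> nat) \<times> (nat \<times> nat)) set \<Rightarrow> word \<Rightarrow> word \<Rightarrow> bool"
  for m n P where
  refl: "word_ok m n w \<Longrightarrow> pres_eq m n P w w"
| sym: "pres_eq m n P u w \<Longrightarrow> pres_eq m n P w u"
| trans: "pres_eq m n P u v \<Longrightarrow> pres_eq m n P v w \<Longrightarrow> pres_eq m n P u w"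
| ctxt: "pres_eq m n P x y \<Longrightarrow> word_ok m n u \<Longrightarrow> word_ok m n v \<Longrightarrow>
         pres_eq m n P (u @ x @ v) (u @ y @ v)"
| cancel: "letter_ok m n (e, g) \<Longrightarrow> pres_eq m n P [(e, g), (\<not> e, g)] []"
| a0: "pres_eq m n P [(False, Inl 0)] []"
| b0: "pres_eq m n P [(False, Inr 0)] []"
| rel: "((i, j), (i', j')) \<in> P \<Longrightarrow>
        pres_eq m n P [(False, Inl i), (False, Inr j)] [(False, Inl i'), (False, Inr j')]"

definition word_class :: "nat \<Rightarrow> nat \<Rightarrow> ((nat \<times> nat) \<times> (nat \<times> nat)) set \<Rightarrow> word \<Rightarrow> word set" where
  "word_class m n P w = {w'. pres_eq m n P w w'}"

definition Gamma :: "nat \<Rightarrow> nat \<Rightarrow> ((nat \<times> nat) \<times> (nat \<times> nat)) set \<Rightarrow> word set monoid" where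
  "Gamma m n P = \<lparr> carrier = word_class m n P ` {w. word_ok m n w},
     mult = (\<lambda>X Y. word_class m n P ((SOME x. x \<in> X) @ (SOME y. y \<in> Y))),
     one = word_class m n P [] \<rparr>"

definition gen_a :: "nat \<Rightarrow> nat \<Rightarrow> ((nat \<times> nat) \<times> (nat \<times> nat)) set \<Rightarrow> nat \<Rightarrow> word set" where
  "gen_a m n P i = word_class m n P [(False, Inl i)]"

definition gen_b :: "nat \<Rightarrow> nat \<Rightarrow> ((nat \<times> nat) \<times> (nat \<times> nat)) set \<Rightarrow> nat \<Rightarrow> word set" where
  "gen_b m n P j = word_class m n P [(False, Inr j)]"

definition nondegenerate :: "nat \<Rightarrow> nat \<Rightarrow> ((nat \<times> nat) \<times> (nat \<times> nat)) set \<Rightarrow> bool" where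
  "nondegenerate m n P \<longleftrightarrow>
     (\<forall>i i'. i < m \<and> i' < m \<and> i \<noteq> i' \<longrightarrow> gen_a m n P i \<noteq> gen_a m n P i') \<and>
     (\<forall>j j'. j < n \<and> j' < n \<and> j \<noteq> j' \<longrightarrow> gen_b m n P j \<noteq> gen_b m n P j')"

definition realizable_with ::
  "nat \<Rightarrow> nat \<Rightarrow> ((nat \<times> nat) \<times> (nat \<times> nat)) set \<Rightarrow> (nat \<Rightarrow> 'k::ring_1) \<Rightarrow> (nat \<Rightarrow> 'k) \<Rightarrow> bool" where
  "realizable_with m n P r s \<longleftrightarrow>
     (\<forall>E \<in> S_grid m n // P.
        (\<Sum>(i, j)\<in>E. r i * s j) = (if (0, 0) \<in> E then 1 else 0))"

definition nonzero_params :: "nat \<Rightarrow> nat \<Rightarrow> (nat \<Rightarrow> 'k::zero) \<Rightarrow> (nat \<Rightarrow> 'k) \<Rightarrow> bool" where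
  "nonzero_params m n r s \<longleftrightarrow> (\<forall>i<m. r i \<noteq> 0) \<and> (\<forall>j<n. s j \<noteq> 0)"

definition minimally_realizable ::
  "'k::ring_1 itself \<Rightarrow> nat \<Rightarrow> nat \<Rightarrow> ((nat \<times> nat) \<times> (nat \<times> nat)) set \<Rightarrow> bool" where
  "minimally_realizable TYPE('k) m n P \<longleftrightarrow>
     (\<exists>(r :: nat \<Rightarrow> 'k) s. nonzero_params m n r s \<and> realizable_with m n P r s \<and>
        (\<forall>P'. is_partition m n P' \<and> P' \<subset> P \<longrightarrow> \<not> realizable_with m n P' r s))"

definition invariant_subgrid ::
  "nat \<Rightarrow> nat \<Rightarrow> ((nat \<times> nat) \<times> (nat \<times> nat)) set \<Rightarrow> nat set \<Rightarrow> nat set \<Rightarrow> bool" where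
  "invariant_subgrid m n P R C \<longleftrightarrow>
     0 \<in> R \<and> R \<subseteq> {0..<m} \<and> 0 \<in> C \<and> C \<subseteq> {0..<n} \<and> card R \<ge> 2 \<and> card C \<ge> 2 \<and>
     (\<forall>i j i' j'. (i, j) \<in> R \<times> C \<and> ((i, j), (i', j')) \<in> P \<longrightarrow> (i', j') \<in> R \<times> C)"

definition proper_subgrid :: "nat \<Rightarrow> nat \<Rightarrow> nat set \<Rightarrow> nat set \<Rightarrow> bool" where
  "proper_subgrid m n R C \<longleftrightarrow> card R < m \<or> card C < n"

definition ULIE2 :: "'k::ring_1 itself \<Rightarrow> nat \<Rightarrow> nat \<Rightarrow> ((nat \<times> nat) \<times> (nat \<times> nat)) set \<Rightarrow> bool" where
  "ULIE2 TYPE('k) m n P \<longleftrightarrow>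
     is_partition m n P \<and> nondegenerate m n P \<and> minimally_realizable TYPE('k) m n P \<and>
     \<not> (\<exists>R C. invariant_subgrid m n P R C \<and> proper_subgrid m n R C)"

end

theory Submission
  imports Defs
begin


locale pres =
  fixes m n :: nat and P :: "((nat \<times> nat) \<times> (nat \<times> nat)) set"
  assumes m_pos: "0 < m" and n_pos: "0 < n" and P_sub: "P \<subseteq> S_grid m n \<times> S_grid m n"
begin

lemma word_ok_append[simp]: "word_ok m n (u @ v) \<longleftrightarrow> word_ok m n u \<and> word_ok m n v"
  by (auto simp: word_ok_def)

lemma word_ok_Cons[simp]: "word_ok m n (l # v) \<longleftrightarrow> letter_ok m n l \<and> word_ok m n v"
  by (auto simp: word_ok_def)

lemma word_ok_Nil[simp]: "word_ok m n []"
  by (auto simp: word_ok_def)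

lemma eq_ok: "pres_eq m n P u w \<Longrightarrow> word_ok m n u \<and> word_ok m n w"
proof (induction rule: pres_eq.induct)
  case (rel i j i' j')
  then show ?case using P_sub by (auto simp: S_grid_def letter_ok_def)
qed (use m_pos n_pos in \<open>auto simp: letter_ok_def\<close>)

lemma cls_eqI: "pres_eq m n P a b \<Longrightarrow> word_class m n P a = word_class m n P b"
  unfolding word_class_def by (auto intro: pres_eq.trans pres_eq.sym)

lemma in_cls: "word_ok m n u \<Longrightarrow> u \<in> word_class m n P u"
  by (simp add: word_class_def pres_eq.refl)

lemma cls_eq_iff: "word_ok m n u \<Longrightarrow> word_ok m n w \<Longrightarrow>
   word_class m n P u = word_class m n P w \<longleftrightarrow> pres_eq m n P u w"
  using in_cls cls_eqI by (auto simp: word_class_def)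

lemma some_cls: "word_ok m n u \<Longrightarrow> pres_eq m n P u (SOME x. x \<in> word_class m n P u)"
  by (metis (mono_tags, lifting) in_cls mem_Collect_eq someI word_class_def)

lemma cong_app: "pres_eq m n P x u \<Longrightarrow> pres_eq m n P y v \<Longrightarrow> pres_eq m n P (x @ y) (u @ v)"
proof -
  assume a: "pres_eq m n P x u" and b: "pres_eq m n P y v"
  have "pres_eq m n P ([] @ x @ y) ([] @ u @ y)"
    using a b eq_ok by (intro pres_eq.ctxt) auto
  moreover have "pres_eq m n P (u @ y @ []) (u @ v @ [])"
    using a b eq_ok by (intro pres_eq.ctxt) auto
  ultimately show ?thesis by (auto intro: pres_eq.trans)
qed

lemma mult_cls: "word_ok m n u \<Longrightarrow> word_ok m n v \<Longrightarrow>
  word_class m n P ((SOME x. x \<in> word_class m n P u) @ (SOME y. y \<in> word_class m n P v))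
  = word_class m n P (u @ v)"
  by (rule cls_eqI, rule pres_eq.sym, intro cong_app some_cls)

definition winv :: "word \<Rightarrow> word" where
  "winv w = rev (map (\<lambda>(e, g). (\<not> e, g)) w)"

lemma winv_ok: "word_ok m n w \<Longrightarrow> word_ok m n (winv w)"
  by (auto simp: word_ok_def winv_def letter_ok_def)

lemma winv_cancel: "word_ok m n w \<Longrightarrow> pres_eq m n P (winv w @ w) []"
proof (induction w)
  case Nil
  then show ?case by (simp add: winv_def pres_eq.refl)
next
  case (Cons l w)
  obtain e g where l: "l = (e, g)" by (cases l)
  have ok: "word_ok m n w" "letter_ok m n (e,g)" using Cons l by auto
  have "winv (l # w) @ l # w = winv w @ [(\<not> e, g), (\<not>\<not> e, g)] @ w"
    by (simp add: winv_def l)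
  moreover have "pres_eq m n P (winv w @ [(\<not> e, g), (\<not>\<not> e, g)] @ w) (winv w @ [] @ w)"
    using ok winv_ok by (intro pres_eq.ctxt pres_eq.cancel) (auto simp: letter_ok_def)
  ultimately show ?case using Cons ok by (auto intro: pres_eq.trans)
qed

lemma Gamma_group: "group (Gamma m n P)"
proof (rule groupI)
  let ?G = "Gamma m n P"
  have car: "carrier ?G = word_class m n P ` {w. word_ok m n w}" by (simp add: Gamma_def)
  have mul: "\<And>u v. word_ok m n u \<Longrightarrow> word_ok m n v \<Longrightarrow>
     word_class m n P u \<otimes>\<^bsub>?G\<^esub> word_class m n P v = word_class m n P (u @ v)"
    by (simp add: Gamma_def mult_cls)
  have one: "\<one>\<^bsub>?G\<^esub> = word_class m n P []" by (simp add: Gamma_def)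
  show "\<And>x y. x \<in> carrier ?G \<Longrightarrow> y \<in> carrier ?G \<Longrightarrow> x \<otimes>\<^bsub>?G\<^esub> y \<in> carrier ?G"
    using car mul by auto
  show "\<one>\<^bsub>?G\<^esub> \<in> carrier ?G" using car one by auto
  show "\<And>x y z. x \<in> carrier ?G \<Longrightarrow> y \<in> carrier ?G \<Longrightarrow> z \<in> carrier ?G \<Longrightarrow>
      x \<otimes>\<^bsub>?G\<^esub> y \<otimes>\<^bsub>?G\<^esub> z = x \<otimes>\<^bsub>?G\<^esub> (y \<otimes>\<^bsub>?G\<^esub> z)"
    using car mul by auto
  show "\<And>x. x \<in> carrier ?G \<Longrightarrow> \<one>\<^bsub>?G\<^esub> \<otimes>\<^bsub>?G\<^esub> x = x"
    using car mul one by auto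
  show "\<And>x. x \<in> carrier ?G \<Longrightarrow> \<exists>y\<in>carrier ?G. y \<otimes>\<^bsub>?G\<^esub> x = \<one>\<^bsub>?G\<^esub>"
  proof -
    fix x assume "x \<in> carrier ?G"
    then obtain w where w: "word_ok m n w" "x = word_class m n P w" using car by auto
    show "\<exists>y\<in>carrier ?G. y \<otimes>\<^bsub>?G\<^esub> x = \<one>\<^bsub>?G\<^esub>"
      using w winv_ok[OF w(1)] winv_cancel[OF w(1)] car mul one
      by (intro bexI[of _ "word_class m n P (winv w)"]) (auto simp: cls_eqI)
  qed
qed

end



lemma N1tor_normal:
  assumes "group Q" shows "N1tor Q \<lhd> Q"
proof -
  interpret Q: group Q by fact
  let ?A = "{H. H \<lhd> Q \<and> torsion_elems Q \<subseteq> H}"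
  have self: "carrier Q \<lhd> Q"
    by (auto simp: Q.normal_inv_iff Q.subgroup_self)
  have ne: "?A \<noteq> {}" using self by (auto simp: torsion_elems_def)
  have sub: "subgroup (\<Inter>?A) Q"
    using ne by (intro Q.subgroups_Inter) (auto simp: normal_def)
  have "\<forall>x\<in>carrier Q. \<forall>h\<in>\<Inter>?A. x \<otimes>\<^bsub>Q\<^esub> h \<otimes>\<^bsub>Q\<^esub> inv\<^bsub>Q\<^esub> x \<in> \<Inter>?A"
  proof (intro ballI InterI)
    fix x h K assume x: "x \<in> carrier Q" and h: "h \<in> \<Inter>?A" and K: "K \<in> ?A"
    then have "K \<lhd> Q" "h \<in> K" by auto
    then show "x \<otimes>\<^bsub>Q\<^esub> h \<otimes>\<^bsub>Q\<^esub> inv\<^bsub>Q\<^esub> x \<in> K" using x Q.normal_inv_iff by blast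
  qed
  then show ?thesis unfolding N1tor_def using sub Q.normal_inv_iff by blast
qed

lemma N1tor_le:
  "H \<lhd> Q \<Longrightarrow> torsion_elems Q \<subseteq> H \<Longrightarrow> N1tor Q \<subseteq> H"
  by (auto simp: N1tor_def)

lemma N1tor_kernel:
  assumes "group Q" "group G" "torsion_free G" "\<psi> \<in> hom Q G"
  shows "N1tor Q \<subseteq> kernel Q G \<psi>"
proof (rule N1tor_le)
  interpret h: group_hom Q G \<psi> using assms by (simp add: group_hom_def group_hom_axioms_def)
  show "kernel Q G \<psi> \<lhd> Q" by (rule h.normal_kernel)
  show "torsion_elems Q \<subseteq> kernel Q G \<psi>"
  proof
    fix x assume "x \<in> torsion_elems Q"
    then obtain k::nat where x: "x \<in> carrier Q" "k > 0" "x [^]\<^bsub>Q\<^esub> k = \<one>\<^bsub>Q\<^esub>"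
      by (auto simp: torsion_elems_def)
    have "\<psi> x [^]\<^bsub>G\<^esub> k = \<one>\<^bsub>G\<^esub>" using x h.hom_nat_pow[of x k] by simp
    moreover have "\<psi> x \<in> carrier G" using x(1) by simp
    ultimately have "\<psi> x = \<one>\<^bsub>G\<^esub>" using assms(3) x(2) unfolding torsion_free_def by blast
    then show "x \<in> kernel Q G \<psi>" using x by (simp add: kernel_def)
  qed
qed

lemma Ntor_step:
  assumes grp: "group \<Gamma>" and gG: "group G" and tf: "torsion_free G" and F: "F \<in> hom \<Gamma> G"
    and H: "H \<lhd> \<Gamma>" and Hk: "H \<subseteq> kernel \<Gamma> G F"
  shows "\<Union> (N1tor (\<Gamma> Mod H)) \<lhd> \<Gamma> \<and> \<Union> (N1tor (\<Gamma> Mod H)) \<subseteq> kernel \<Gamma> G F"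
proof -
  interpret \<Gamma>: group \<Gamma> by fact
  interpret G: group G by fact
  interpret H: normal H \<Gamma> by fact
  interpret Fh: group_hom \<Gamma> G F using grp gG F by (simp add: group_hom_def group_hom_axioms_def)
  let ?Q = "\<Gamma> Mod H"
  have gQ: "group ?Q" by (rule H.factorgroup_is_group)
  interpret Q: group ?Q by fact
  let ?N = "N1tor ?Q"
  have Nn: "?N \<lhd> ?Q" by (rule N1tor_normal[OF gQ])
  interpret N: normal ?N ?Q by fact
  have img: "F ` (H #>\<^bsub>\<Gamma>\<^esub> x) = {F x}" if x: "x \<in> carrier \<Gamma>" for x
  proof -
    have hx: "F (h \<otimes>\<^bsub>\<Gamma>\<^esub> x) = F x" if "h \<in> H" for h
    proof -
      have "h \<in> carrier \<Gamma>" "F h = \<one>\<^bsub>G\<^esub>" using that Hk by (auto simp: kernel_def)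
      then show ?thesis using x by simp
    qed
    moreover have "\<one>\<^bsub>\<Gamma>\<^esub> \<in> H" by (simp add: H.one_closed)
    moreover have "\<one>\<^bsub>\<Gamma>\<^esub> \<otimes>\<^bsub>\<Gamma>\<^esub> x = x" using x by simp
    ultimately show ?thesis unfolding r_coset_def
    proof (intro equalityI subsetI)
      fix y assume "y \<in> F ` (\<Union>h\<in>H. {h \<otimes>\<^bsub>\<Gamma>\<^esub> x})"
      then obtain h where "h \<in> H" "y = F (h \<otimes>\<^bsub>\<Gamma>\<^esub> x)" by blast
      then show "y \<in> {F x}" using hx by simp
    next
      fix y assume "y \<in> {F x}"
      then have "y = F (\<one>\<^bsub>\<Gamma>\<^esub> \<otimes>\<^bsub>\<Gamma>\<^esub> x)" using x by simp
      then show "y \<in> F ` (\<Union>h\<in>H. {h \<otimes>\<^bsub>\<Gamma>\<^esub> x})" using H.one_closed by blast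
    qed
  qed
  define \<psi> where "\<psi> C = the_elem (F ` C)" for C
  have \<psi>: "\<psi> (H #>\<^bsub>\<Gamma>\<^esub> x) = F x" if "x \<in> carrier \<Gamma>" for x
    using img[OF that] by (simp add: \<psi>_def)
  have \<psi>hom: "\<psi> \<in> hom ?Q G"
  proof (rule homI)
    fix C assume "C \<in> carrier ?Q"
    then obtain x where "x \<in> carrier \<Gamma>" "C = H #>\<^bsub>\<Gamma>\<^esub> x" by (auto simp: carrier_FactGroup)
    then show "\<psi> C \<in> carrier G" using \<psi> by auto
  next
    fix C D assume "C \<in> carrier ?Q" "D \<in> carrier ?Q"
    then obtain x y where "x \<in> carrier \<Gamma>" "C = H #>\<^bsub>\<Gamma>\<^esub> x" "y \<in> carrier \<Gamma>" "D = H #>\<^bsub>\<Gamma>\<^esub> y"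
      by (auto simp: carrier_FactGroup)
    then show "\<psi> (C \<otimes>\<^bsub>?Q\<^esub> D) = \<psi> C \<otimes>\<^bsub>G\<^esub> \<psi> D"
      by (simp add: H.rcos_sum \<psi>)
  qed
  have Nk: "?N \<subseteq> kernel ?Q G \<psi>" by (rule N1tor_kernel[OF gQ gG tf \<psi>hom])
  have sub1: "\<Union> ?N \<subseteq> kernel \<Gamma> G F"
  proof
    fix x assume "x \<in> \<Union> ?N"
    then obtain C where C: "C \<in> ?N" "x \<in> C" by auto
    then have Ck: "C \<in> carrier ?Q" "\<psi> C = \<one>\<^bsub>G\<^esub>" using Nk by (auto simp: kernel_def)
    then obtain y where y: "y \<in> carrier \<Gamma>" "C = H #>\<^bsub>\<Gamma>\<^esub> y" by (auto simp: carrier_FactGroup)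
    have "x \<in> carrier \<Gamma>" using C y H.elemrcos_carrier[OF grp y(1)] by simp
    moreover have "F x \<in> F ` C" using C by auto
    ultimately show "x \<in> kernel \<Gamma> G F" using Ck y img \<psi> by (auto simp: kernel_def)
  qed
  have homc: "(\<lambda>x. ?N #>\<^bsub>?Q\<^esub> (H #>\<^bsub>\<Gamma>\<^esub> x)) \<in> hom \<Gamma> (?Q Mod ?N)"
    using hom_compose[OF H.r_coset_hom_Mod N.r_coset_hom_Mod] by (simp add: comp_def)
  have gQN: "group (?Q Mod ?N)" by (rule N.factorgroup_is_group)
  interpret c: group_hom \<Gamma> "?Q Mod ?N" "\<lambda>x. ?N #>\<^bsub>?Q\<^esub> (H #>\<^bsub>\<Gamma>\<^esub> x)"
    using grp gQN homc by (simp add: group_hom_def group_hom_axioms_def)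
  have eqk: "\<Union> ?N = kernel \<Gamma> (?Q Mod ?N) (\<lambda>x. ?N #>\<^bsub>?Q\<^esub> (H #>\<^bsub>\<Gamma>\<^esub> x))"
  proof (rule Set.set_eqI)
    fix x
    have memc: "c \<in> ?N \<longleftrightarrow> ?N #>\<^bsub>?Q\<^esub> c = ?N" if "c \<in> carrier ?Q" for c
    proof
      assume "c \<in> ?N" then show "?N #>\<^bsub>?Q\<^esub> c = ?N"
        using Q.coset_join2[OF that N.subgroup_axioms] by simp
    next
      assume "?N #>\<^bsub>?Q\<^esub> c = ?N" then show "c \<in> ?N"
        using Q.rcos_self[OF that N.subgroup_axioms] by simp
    qed
    show "x \<in> \<Union> ?N \<longleftrightarrow> x \<in> kernel \<Gamma> (?Q Mod ?N) (\<lambda>x. ?N #>\<^bsub>?Q\<^esub> (H #>\<^bsub>\<Gamma>\<^esub> x))"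
    proof
      assume "x \<in> \<Union> ?N"
      then obtain C where C: "C \<in> ?N" "x \<in> C" by auto
      then have "C \<in> carrier ?Q" using N.subset by auto
      then obtain y where y: "y \<in> carrier \<Gamma>" "C = H #>\<^bsub>\<Gamma>\<^esub> y" by (auto simp: carrier_FactGroup)
      have xC: "x \<in> H #>\<^bsub>\<Gamma>\<^esub> y" using C y by simp
      have xc: "x \<in> carrier \<Gamma>" by (rule H.elemrcos_carrier[OF grp y(1) xC])
      have "H #>\<^bsub>\<Gamma>\<^esub> y = H #>\<^bsub>\<Gamma>\<^esub> x"
        by (rule \<Gamma>.repr_independence[OF xC y(1) H.subgroup_axioms])
      then have "H #>\<^bsub>\<Gamma>\<^esub> x \<in> ?N" using C y by simp
      moreover have "H #>\<^bsub>\<Gamma>\<^esub> x \<in> carrier ?Q" using xc by (auto simp: carrier_FactGroup)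
      ultimately show "x \<in> kernel \<Gamma> (?Q Mod ?N) (\<lambda>x. ?N #>\<^bsub>?Q\<^esub> (H #>\<^bsub>\<Gamma>\<^esub> x))"
        using memc xc by (simp add: kernel_def)
    next
      assume "x \<in> kernel \<Gamma> (?Q Mod ?N) (\<lambda>x. ?N #>\<^bsub>?Q\<^esub> (H #>\<^bsub>\<Gamma>\<^esub> x))"
      then have xc: "x \<in> carrier \<Gamma>" and e: "?N #>\<^bsub>?Q\<^esub> (H #>\<^bsub>\<Gamma>\<^esub> x) = ?N"
        by (auto simp: kernel_def)
      have "H #>\<^bsub>\<Gamma>\<^esub> x \<in> carrier ?Q" using xc by (auto simp: carrier_FactGroup)
      then have "H #>\<^bsub>\<Gamma>\<^esub> x \<in> ?N" using memc e by simp
      moreover have "x \<in> H #>\<^bsub>\<Gamma>\<^esub> x" using xc \<Gamma>.rcos_self H.subgroup_axioms by auto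
      ultimately show "x \<in> \<Union> ?N" by auto
    qed
  qed
  show ?thesis using eqk c.normal_kernel sub1 by simp
qed

lemma Ntor_seq_kernel:
  assumes grp: "group \<Gamma>" and gG: "group G" and tf: "torsion_free G" and F: "F \<in> hom \<Gamma> G"
  shows "Ntor_seq \<Gamma> (Suc k) \<lhd> \<Gamma> \<and> Ntor_seq \<Gamma> (Suc k) \<subseteq> kernel \<Gamma> G F"
proof (induction k)
  case 0
  then show ?case using N1tor_normal[OF grp] N1tor_kernel[OF grp gG tf F] by simp
next
  case (Suc k)
  then show ?case using Ntor_step[OF grp gG tf F] by simp
qed

lemma phi_tor_eq:
  assumes grp: "group \<Gamma>" and gG: "group G" and tf: "torsion_free G" and F: "F \<in> hom \<Gamma> G"
    and x: "x \<in> carrier \<Gamma>" and y: "y \<in> carrier \<Gamma>" and e: "phi_tor \<Gamma> x = phi_tor \<Gamma> y"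
  shows "F x = F y"
proof -
  interpret \<Gamma>: group \<Gamma> by fact
  interpret Fh: group_hom \<Gamma> G F using grp gG F by (simp add: group_hom_def group_hom_axioms_def)
  have Nk: "Ntor \<Gamma> \<subseteq> kernel \<Gamma> G F"
  proof
    fix z assume "z \<in> Ntor \<Gamma>"
    then obtain k where k: "k \<ge> 1" "z \<in> Ntor_seq \<Gamma> k" by (auto simp: Ntor_def)
    then have "z \<in> Ntor_seq \<Gamma> (Suc (k - 1))" by simp
    then show "z \<in> kernel \<Gamma> G F" using Ntor_seq_kernel[OF grp gG tf F, of "k - 1"] by blast
  qed
  have "subgroup (Ntor_seq \<Gamma> (Suc 0)) \<Gamma>"
    using Ntor_seq_kernel[OF grp gG tf F, of 0] normal_imp_subgroup by blast
  then have "\<one>\<^bsub>\<Gamma>\<^esub> \<in> Ntor_seq \<Gamma> 1" by (simp add: subgroup.one_closed)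
  then have o: "\<one>\<^bsub>\<Gamma>\<^esub> \<in> Ntor \<Gamma>" unfolding Ntor_def by blast
  have "x = \<one>\<^bsub>\<Gamma>\<^esub> \<otimes>\<^bsub>\<Gamma>\<^esub> x" using x by simp
  then have "x \<in> Ntor \<Gamma> #>\<^bsub>\<Gamma>\<^esub> x" using o unfolding r_coset_def by blast
  then have "x \<in> Ntor \<Gamma> #>\<^bsub>\<Gamma>\<^esub> y" using e by (simp add: phi_tor_def)
  then obtain h where h: "h \<in> Ntor \<Gamma>" "x = h \<otimes>\<^bsub>\<Gamma>\<^esub> y" by (auto simp: r_coset_def)
  then have "h \<in> carrier \<Gamma>" "F h = \<one>\<^bsub>G\<^esub>" using Nk by (auto simp: kernel_def)
  then show ?thesis using h y by simp
qed




fun lval :: "('g, 'm) monoid_scheme \<Rightarrow> (nat \<Rightarrow> 'g) \<Rightarrow> (nat \<Rightarrow> 'g) \<Rightarrow> bool \<times> (nat + nat) \<Rightarrow> 'g" where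
  "lval G u v (e, Inl i) = (if e then inv\<^bsub>G\<^esub> (u i) else u i)"
| "lval G u v (e, Inr j) = (if e then inv\<^bsub>G\<^esub> (v j) else v j)"

primrec weval :: "('g, 'm) monoid_scheme \<Rightarrow> (nat \<Rightarrow> 'g) \<Rightarrow> (nat \<Rightarrow> 'g) \<Rightarrow> word \<Rightarrow> 'g" where
  "weval G u v [] = \<one>\<^bsub>G\<^esub>"
| "weval G u v (l # w) = lval G u v l \<otimes>\<^bsub>G\<^esub> weval G u v w"

locale pres_hom = pres m n P for m n P +
  fixes G :: "('g, 'm) monoid_scheme" and u v :: "nat \<Rightarrow> 'g"
  assumes grpG: "group G" and u_car: "\<And>i. u i \<in> carrier G" and v_car: "\<And>j. v j \<in> carrier G"
    and u0: "u 0 = \<one>\<^bsub>G\<^esub>" and v0: "v 0 = \<one>\<^bsub>G\<^esub>"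
    and rel_ok: "\<And>i j i' j'. ((i, j), (i', j')) \<in> P \<Longrightarrow> u i \<otimes>\<^bsub>G\<^esub> v j = u i' \<otimes>\<^bsub>G\<^esub> v j'"
begin

interpretation G: group G by (rule grpG)

lemma lval_car[simp]: "lval G u v l \<in> carrier G"
  by (cases l; rename_tac e g; case_tac g) (auto simp: u_car v_car)

lemma weval_car[simp]: "weval G u v w \<in> carrier G"
  by (induction w) auto

lemma weval_append[simp]: "weval G u v (x @ y) = weval G u v x \<otimes>\<^bsub>G\<^esub> weval G u v y"
  by (induction x) (auto simp: G.m_assoc)

lemma weval_eq: "pres_eq m n P x y \<Longrightarrow> weval G u v x = weval G u v y"
proof (induction rule: pres_eq.induct)
  case (ctxt x y u' v')
  then show ?case by simp
next
  case (cancel e g)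
  then show ?case
    by (cases g) (auto simp: u_car v_car)
next
  case a0 then show ?case by (simp add: u0)
next
  case b0 then show ?case by (simp add: v0)
next
  case (rel i j i' j')
  then show ?case using rel_ok[OF rel] by (simp add: u_car v_car)
qed auto

definition Fhom :: "word set \<Rightarrow> 'g" where
  "Fhom X = weval G u v (SOME x. x \<in> X)"

lemma Fhom_cls: "word_ok m n w \<Longrightarrow> Fhom (word_class m n P w) = weval G u v w"
  unfolding Fhom_def using some_cls weval_eq by metis

lemma Fhom_hom: "Fhom \<in> hom (Gamma m n P) G"
proof (rule homI)
  fix X assume "X \<in> carrier (Gamma m n P)"
  then obtain w where "word_ok m n w" "X = word_class m n P w" by (auto simp: Gamma_def)
  then show "Fhom X \<in> carrier G" by (simp add: Fhom_cls)
next
  fix X Y assume "X \<in> carrier (Gamma m n P)" "Y \<in> carrier (Gamma m n P)"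
  then obtain x y where "word_ok m n x" "X = word_class m n P x" "word_ok m n y" "Y = word_class m n P y"
    by (auto simp: Gamma_def)
  then show "Fhom (X \<otimes>\<^bsub>Gamma m n P\<^esub> Y) = Fhom X \<otimes>\<^bsub>G\<^esub> Fhom Y"
    by (simp add: Gamma_def mult_cls Fhom_cls)
qed

lemma Fhom_a: "i < m \<Longrightarrow> Fhom (gen_a m n P i) = u i"
  by (simp add: gen_a_def Fhom_cls letter_ok_def u_car)

lemma Fhom_b: "j < n \<Longrightarrow> Fhom (gen_b m n P j) = v j"
  by (simp add: gen_b_def Fhom_cls letter_ok_def v_car)

lemma gen_a_car: "i < m \<Longrightarrow> gen_a m n P i \<in> carrier (Gamma m n P)"
  by (auto simp: gen_a_def Gamma_def letter_ok_def)

lemma gen_b_car: "j < n \<Longrightarrow> gen_b m n P j \<in> carrier (Gamma m n P)"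
  by (auto simp: gen_b_def Gamma_def letter_ok_def)

end



lemma gr_mult_formula:
  fixes a b :: "'g \<Rightarrow> 'k::ring_1"
  assumes grp: "group G" and fI: "finite I" and fJ: "finite J"
    and ig: "inj_on g I" and ih: "inj_on h J"
    and sa: "supp a = g ` I" and sb: "supp b = h ` J"
    and gc: "g ` I \<subseteq> carrier G" and hc: "h ` J \<subseteq> carrier G" and x: "x \<in> carrier G"
  shows "gr_mult G a b x =
     (\<Sum>(i, j)\<in>{(i, j). i \<in> I \<and> j \<in> J \<and> g i \<otimes>\<^bsub>G\<^esub> h j = x}. a (g i) * b (h j))"
proof -
  interpret G: group G by (rule grp)
  have inner: "b (inv\<^bsub>G\<^esub> (g i) \<otimes>\<^bsub>G\<^esub> x) = (\<Sum>j\<in>{j \<in> J. g i \<otimes>\<^bsub>G\<^esub> h j = x}. b (h j))"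
    if i: "i \<in> I" for i
  proof -
    have gi: "g i \<in> carrier G" using gc i by auto
    define y where "y = inv\<^bsub>G\<^esub> (g i) \<otimes>\<^bsub>G\<^esub> x"
    have yc: "y \<in> carrier G" using gi x by (simp add: y_def)
    have eqs: "{j \<in> J. g i \<otimes>\<^bsub>G\<^esub> h j = x} = {j \<in> J. h j = y}"
    proof -
      have "g i \<otimes>\<^bsub>G\<^esub> h j = x \<longleftrightarrow> h j = y" if "j \<in> J" for j
        using hc that gi x G.inv_solve_left[of "h j" "g i" x] by (auto simp: y_def)
      then show ?thesis by auto
    qed
    show ?thesis
    proof (cases "y \<in> h ` J")
      case True
      then obtain j0 where j0: "j0 \<in> J" "y = h j0" by auto
      then have "{j \<in> J. h j = y} = {j0}" using ih by (auto simp: inj_on_def)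
      then show ?thesis using eqs j0 by (simp add: y_def)
    next
      case False
      then have "{j \<in> J. h j = y} = {}" by auto
      moreover have "b y = 0" using False sb by (auto simp: supp_def)
      ultimately show ?thesis using eqs by (simp add: y_def)
    qed
  qed
  have "gr_mult G a b x = (\<Sum>k\<in>supp a. a k * b (inv\<^bsub>G\<^esub> k \<otimes>\<^bsub>G\<^esub> x))"
    using x by (simp add: gr_mult_def)
  also have "\<dots> = (\<Sum>i\<in>I. a (g i) * b (inv\<^bsub>G\<^esub> (g i) \<otimes>\<^bsub>G\<^esub> x))"
    unfolding sa using sum.reindex[OF ig] by simp
  also have "\<dots> = (\<Sum>i\<in>I. (\<Sum>j\<in>{j \<in> J. g i \<otimes>\<^bsub>G\<^esub> h j = x}. a (g i) * b (h j)))"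
    by (rule sum.cong) (simp_all add: inner sum_distrib_left)
  also have "\<dots> = (\<Sum>(i, j)\<in>(SIGMA i:I. {j \<in> J. g i \<otimes>\<^bsub>G\<^esub> h j = x}). a (g i) * b (h j))"
    by (rule sum.Sigma) (use fI fJ in auto)
  also have "(SIGMA i:I. {j \<in> J. g i \<otimes>\<^bsub>G\<^esub> h j = x}) = {(i, j). i \<in> I \<and> j \<in> J \<and> g i \<otimes>\<^bsub>G\<^esub> h j = x}"
    by auto
  finally show ?thesis .
qed




lemma class_sum:
  fixes f :: "'a \<Rightarrow> 'k::ring_1"
  assumes eq: "equiv S Q" and TS: "T \<subseteq> S" and fS: "finite S"
    and cl: "\<And>p q. p \<in> T \<Longrightarrow> (p, q) \<in> Q \<Longrightarrow> q \<in> T"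
    and re: "\<And>E. E \<in> S // Q \<Longrightarrow> sum f E = (if z \<in> E then 1 else 0)"
    and zS: "z \<in> S"
  shows "sum f T = (if z \<in> T then 1 else 0)"
proof -
  define cls where "cls p = Q `` {p}" for p
  have fT: "finite T" using fS TS finite_subset by blast
  have ceq: "cls p = cls q \<longleftrightarrow> (p, q) \<in> Q" if "p \<in> S" "q \<in> S" for p q
    using equiv_class_eq_iff[OF eq] that by (auto simp: cls_def)
  have sub: "{p \<in> T. cls p = cls q} = cls q" if q: "q \<in> T" for q
  proof
    show "{p \<in> T. cls p = cls q} \<subseteq> cls q"
    proof
      fix p assume "p \<in> {p \<in> T. cls p = cls q}"
      then have "p \<in> T" "cls p = cls q" by auto
      then have "(p, q) \<in> Q" using ceq TS q by auto
      then have "(q, p) \<in> Q" using eq by (auto simp: equiv_def sym_def)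
      then show "p \<in> cls q" by (simp add: cls_def)
    qed
    show "cls q \<subseteq> {p \<in> T. cls p = cls q}"
    proof
      fix p assume p: "p \<in> cls q"
      then have pq: "(q, p) \<in> Q" by (simp add: cls_def)
      then have "p \<in> T" using cl q by blast
      moreover have "(p, q) \<in> Q" using pq eq by (auto simp: equiv_def sym_def)
      ultimately show "p \<in> {p \<in> T. cls p = cls q}" using ceq TS q by auto
    qed
  qed
  have "sum f T = (\<Sum>E\<in>cls ` T. sum f {p \<in> T. cls p = E})"
    by (rule sum.group[symmetric]) (use fT in auto)
  also have "\<dots> = (\<Sum>E\<in>cls ` T. (if E = cls z then 1 else 0))"
  proof (rule sum.cong)
    fix E assume "E \<in> cls ` T"
    then obtain q where q: "q \<in> T" "E = cls q" by auto
    have "E \<in> S // Q" using q TS by (auto simp: quotient_def cls_def)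
    then have "sum f E = (if z \<in> E then 1 else 0)" by (rule re)
    moreover have "z \<in> E \<longleftrightarrow> E = cls z"
      using q ceq[of q z] TS zS by (auto simp: cls_def)
    ultimately show "sum f {p \<in> T. cls p = E} = (if E = cls z then 1 else 0)"
      using sub q by simp
  qed simp
  also have "\<dots> = (if cls z \<in> cls ` T then 1 else 0)"
    using fT by (simp add: sum.delta)
  also have "cls z \<in> cls ` T \<longleftrightarrow> z \<in> T"
  proof
    assume "cls z \<in> cls ` T"
    then obtain q where "q \<in> T" "cls z = cls q" by auto
    then have "(q, z) \<in> Q" using ceq[of z q] TS zS eq by (auto simp: equiv_def sym_def)
    then show "z \<in> T" using cl \<open>q \<in> T\<close> by blast
  qed auto
  finally show ?thesis .
qed




lemma enum_with0:
  assumes "finite A" "x \<in> A"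
  shows "\<exists>g. bij_betw g {0..<card A} A \<and> g 0 = x"
proof -
  obtain e where e: "bij_betw e {0..<card (A - {x})} (A - {x})"
    using ex_bij_betw_nat_finite assms(1) by blast
  have c: "card (A - {x}) = card A - 1" using assms by simp
  have cpos: "card A > 0" using assms card_gt_0_iff by blast
  define g where "g i = (if i = 0 then x else e (i - 1))" for i
  have "inj_on g {0..<card A}"
  proof (rule inj_onI)
    fix i j assume i: "i \<in> {0..<card A}" and j: "j \<in> {0..<card A}" and gij: "g i = g j"
    show "i = j"
    proof (cases "i = 0"; cases "j = 0")
      assume "i \<noteq> 0" "j \<noteq> 0"
      then have "e (i - 1) = e (j - 1)" "i - 1 \<in> {0..<card (A - {x})}" "j - 1 \<in> {0..<card (A - {x})}"
        using gij i j c by (auto simp: g_def)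
      then have "i - 1 = j - 1" using e by (auto simp: bij_betw_def inj_on_def)
      then show ?thesis using \<open>i \<noteq> 0\<close> \<open>j \<noteq> 0\<close> by simp
    next
      assume "i = 0" "j \<noteq> 0"
      then have "x = e (j - 1)" "j - 1 \<in> {0..<card (A - {x})}" using gij j c by (auto simp: g_def)
      then show ?thesis using e by (auto simp: bij_betw_def)
    next
      assume "i \<noteq> 0" "j = 0"
      then have "x = e (i - 1)" "i - 1 \<in> {0..<card (A - {x})}" using gij i c by (auto simp: g_def)
      then show ?thesis using e by (auto simp: bij_betw_def)
    qed simp
  qed
  moreover have "g ` {0..<card A} = A"
  proof
    show "g ` {0..<card A} \<subseteq> A"
    proof
      fix y assume "y \<in> g ` {0..<card A}"
      then obtain i where i: "i < card A" "y = g i" by auto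
      show "y \<in> A"
      proof (cases "i = 0")
        case False
        then have "i - 1 \<in> {0..<card (A - {x})}" using i c by auto
        then show ?thesis using e i False by (auto simp: bij_betw_def g_def)
      qed (use i assms in \<open>auto simp: g_def\<close>)
    qed
    show "A \<subseteq> g ` {0..<card A}"
    proof
      fix y assume y: "y \<in> A"
      show "y \<in> g ` {0..<card A}"
      proof (cases "y = x")
        case True then show ?thesis using cpos by (auto simp: g_def intro!: image_eqI[of _ _ 0])
      next
        case False
        then have "y \<in> e ` {0..<card (A - {x})}" using e y by (auto simp: bij_betw_def)
        then obtain k where k: "k < card A - 1" "y = e k" using c by auto
        then have "y = g (Suc k)" "Suc k < card A" by (auto simp: g_def)
        then show ?thesis by auto
      qed
    qed
  qed
  moreover have "g 0 = x" by (simp add: g_def)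
  ultimately show ?thesis unfolding bij_betw_def by blast
qed




lemma main_step:
  fixes M N M' N' :: nat
    and G :: "('g, 'm) monoid_scheme" and a b :: "'g \<Rightarrow> 'k::division_ring"
  assumes hyp: "\<forall>m n P. 2 \<le> m \<and> m \<le> M \<and> 2 \<le> n \<and> n \<le> N \<and> ULIE2 TYPE('k::division_ring) m n P \<longrightarrow>
        (\<exists>i i'. i < i' \<and> i' < m \<and>
            phi_tor (Gamma m n P) (gen_a m n P i) = phi_tor (Gamma m n P) (gen_a m n P i')) \<or>
        (\<exists>j j'. j < j' \<and> j' < n \<and>
            phi_tor (Gamma m n P) (gen_b m n P j) = phi_tor (Gamma m n P) (gen_b m n P j'))"
    and grp: "group G" and tf: "torsion_free G"
    and bM: "2 \<le> M'" "M' \<le> M" and bN: "2 \<le> N'" "N' \<le> N"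
    and a: "a \<in> group_ring G" and b: "b \<in> group_ring G"
    and ra: "gr_rank a = M'" and rb: "gr_rank b = N'" and ab: "gr_mult G a b = gr_one G"
    and IH: "\<And>M'' N'' (a' :: 'g \<Rightarrow> 'k) b'. 2 \<le> M'' \<Longrightarrow> M'' \<le> M \<Longrightarrow> 2 \<le> N'' \<Longrightarrow> N'' \<le> N \<Longrightarrow>
        M'' + N'' < M' + N' \<Longrightarrow> a' \<in> group_ring G \<Longrightarrow> b' \<in> group_ring G \<Longrightarrow>
        gr_rank a' = M'' \<Longrightarrow> gr_rank b' = N'' \<Longrightarrow> gr_mult G a' b' = gr_one G \<Longrightarrow> False"
  shows False
proof -
  interpret G: group G by (rule grp)
  have fa: "finite (supp a)" and sa: "supp a \<subseteq> carrier G" using a by (auto simp: group_ring_def)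
  have fb: "finite (supp b)" and sb: "supp b \<subseteq> carrier G" using b by (auto simp: group_ring_def)
  obtain g0 h0 where g0: "g0 \<in> supp a" and h0: "h0 \<in> supp b" and gh0: "g0 \<otimes>\<^bsub>G\<^esub> h0 = \<one>\<^bsub>G\<^esub>"
  proof -
    have "gr_mult G a b \<one>\<^bsub>G\<^esub> = 1" using ab by (simp add: gr_one_def)
    then have "(\<Sum>k\<in>supp a. a k * b (inv\<^bsub>G\<^esub> k \<otimes>\<^bsub>G\<^esub> \<one>\<^bsub>G\<^esub>)) \<noteq> 0"
      by (simp add: gr_mult_def)
    then obtain k where k: "k \<in> supp a" "a k * b (inv\<^bsub>G\<^esub> k \<otimes>\<^bsub>G\<^esub> \<one>\<^bsub>G\<^esub>) \<noteq> 0"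
      by (meson sum.not_neutral_contains_not_neutral)
    have kc: "k \<in> carrier G" using k sa by auto
    then have "b (inv\<^bsub>G\<^esub> k) \<noteq> 0" using k by auto
    then have "inv\<^bsub>G\<^esub> k \<in> supp b" by (simp add: supp_def)
    moreover have "k \<otimes>\<^bsub>G\<^esub> inv\<^bsub>G\<^esub> k = \<one>\<^bsub>G\<^esub>" using kc by simp
    ultimately show ?thesis using that k by blast
  qed
  have g0c: "g0 \<in> carrier G" using g0 sa by auto
  have h0c: "h0 \<in> carrier G" using h0 sb by auto
  have h0inv: "h0 = inv\<^bsub>G\<^esub> g0" using gh0 g0c h0c by (metis G.inv_equality G.l_inv G.inv_closed G.m_assoc G.l_one G.r_one)
  obtain g where g: "bij_betw g {0..<M'} (supp a)" "g 0 = g0"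
    using enum_with0[OF fa g0] ra by (auto simp: gr_rank_def)
  obtain h where h: "bij_betw h {0..<N'} (supp b)" "h 0 = h0"
    using enum_with0[OF fb h0] rb by (auto simp: gr_rank_def)
  have ig: "inj_on g {0..<M'}" and gim: "g ` {0..<M'} = supp a" using g by (auto simp: bij_betw_def)
  have ih: "inj_on h {0..<N'}" and him: "h ` {0..<N'} = supp b" using h by (auto simp: bij_betw_def)
  have gc: "\<And>i. i < M' \<Longrightarrow> g i \<in> carrier G" using gim sa by auto
  have hc: "\<And>j. j < N' \<Longrightarrow> h j \<in> carrier G" using him sb by auto
  define r where "r i = a (g i)" for i
  define s where "s j = b (h j)" for j
  have rnz: "\<And>i. i < M' \<Longrightarrow> r i \<noteq> 0" using gim by (auto simp: r_def supp_def)
  have snz: "\<And>j. j < N' \<Longrightarrow> s j \<noteq> 0" using him by (auto simp: s_def supp_def)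
  define S where "S = S_grid M' N'"
  define pr where "pr p = g (fst p) \<otimes>\<^bsub>G\<^esub> h (snd p)" for p
  define \<pi> where "\<pi> = {(p, q). p \<in> S \<and> q \<in> S \<and> pr p = pr q}"
  have fS: "finite S" by (simp add: S_def S_grid_def)
  have pr00: "pr (0, 0) = \<one>\<^bsub>G\<^esub>" using gh0 g h by (simp add: pr_def)
  have S00: "(0, 0) \<in> S" using bM bN by (simp add: S_def S_grid_def)
  have eqpi: "equiv S \<pi>"
    by (auto simp: equiv_def refl_on_def sym_def trans_def \<pi>_def)
  have formula: "gr_mult G a' b' x = (\<Sum>(i, j)\<in>{(i, j). i \<in> R \<and> j \<in> C \<and> pr (i, j) = x}. r i * s j)"
    if R: "R \<subseteq> {0..<M'}" and C: "C \<subseteq> {0..<N'}" and x: "x \<in> carrier G"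
      and a': "a' = (\<lambda>k. if k \<in> g ` R then a k else 0)" and b': "b' = (\<lambda>k. if k \<in> h ` C then b k else 0)"
    for R C x a' b'
  proof -
    have sa': "supp a' = g ` R" using a' R gim by (auto simp: supp_def)
    have sb': "supp b' = h ` C" using b' C him by (auto simp: supp_def)
    have "gr_mult G a' b' x = (\<Sum>(i, j)\<in>{(i, j). i \<in> R \<and> j \<in> C \<and> g i \<otimes>\<^bsub>G\<^esub> h j = x}. a' (g i) * b' (h j))"
      by (rule gr_mult_formula[OF grp _ _ _ _ sa' sb' _ _ x])
        (use R C ig ih gc hc in \<open>auto intro: finite_subset inj_on_subset\<close>)
    also have "\<dots> = (\<Sum>(i, j)\<in>{(i, j). i \<in> R \<and> j \<in> C \<and> pr (i, j) = x}. r i * s j)"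
      by (rule sum.cong) (auto simp: a' b' r_def s_def pr_def)
    finally show ?thesis .
  qed
  have one_eq: "gr_one G x = (if x = \<one>\<^bsub>G\<^esub> then 1 else 0)" for x
    by (simp add: gr_one_def)
  have real_pi: "realizable_with M' N' \<pi> r s"
    unfolding realizable_with_def
  proof
    fix E assume "E \<in> S_grid M' N' // \<pi>"
    then obtain p where p: "p \<in> S" "E = \<pi> `` {p}" by (auto simp: quotient_def S_def)
    define x where "x = pr p"
    have xc: "x \<in> carrier G" using p gc hc by (auto simp: x_def pr_def S_def S_grid_def)
    have Eeq: "E = {(i, j). i \<in> {0..<M'} \<and> j \<in> {0..<N'} \<and> pr (i, j) = x}"
      using p by (auto simp: \<pi>_def x_def S_def S_grid_def)
    have aa: "a = (\<lambda>k. if k \<in> g ` {0..<M'} then a k else 0)"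
      using gim by (auto simp: supp_def)
    have bb: "b = (\<lambda>k. if k \<in> h ` {0..<N'} then b k else 0)"
      using him by (auto simp: supp_def)
    have "(\<Sum>(i, j)\<in>E. r i * s j) = gr_mult G a b x"
      unfolding Eeq by (rule formula[OF _ _ xc aa bb, symmetric]) auto
    also have "\<dots> = (if x = \<one>\<^bsub>G\<^esub> then 1 else 0)" using ab by (simp add: gr_one_def)
    also have "x = \<one>\<^bsub>G\<^esub> \<longleftrightarrow> (0, 0) \<in> E" using Eeq pr00 bM bN by auto
    finally show "(\<Sum>(i, j)\<in>E. r i * s j) = (if (0, 0) \<in> E then 1 else 0)" .
  qed
  define Cands where "Cands = {P'. is_partition M' N' P' \<and> P' \<subseteq> \<pi> \<and> realizable_with M' N' P' r s}"
  have "\<pi> \<in> Cands" using eqpi real_pi by (simp add: Cands_def is_partition_def S_def)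
  then obtain \<pi>' where \<pi>'C: "\<pi>' \<in> Cands" and \<pi>'min: "\<And>P''. P'' \<in> Cands \<Longrightarrow> card \<pi>' \<le> card P''"
    using ex_has_least_nat[of "\<lambda>P. P \<in> Cands" \<pi> card] by blast
  have eq': "equiv S \<pi>'" and sub': "\<pi>' \<subseteq> \<pi>" and real': "realizable_with M' N' \<pi>' r s"
    using \<pi>'C by (auto simp: Cands_def is_partition_def S_def)
  have \<pi>'SS: "\<pi>' \<subseteq> S_grid M' N' \<times> S_grid M' N'" using eq' by (auto simp: S_def equiv_def refl_on_def)
  have fpi': "finite \<pi>'" using \<pi>'SS by (rule finite_subset) (simp add: S_grid_def)
  have minr: "minimally_realizable TYPE('k) M' N' \<pi>'"
    unfolding minimally_realizable_def
  proof (intro exI conjI allI impI)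
    show "nonzero_params M' N' r s" using rnz snz by (simp add: nonzero_params_def)
    show "realizable_with M' N' \<pi>' r s" by (rule real')
    fix P' assume P': "is_partition M' N' P' \<and> P' \<subset> \<pi>'"
    show "\<not> realizable_with M' N' P' r s"
    proof
      assume "realizable_with M' N' P' r s"
      then have "P' \<in> Cands" using P' sub' by (auto simp: Cands_def)
      then have "card \<pi>' \<le> card P'" by (rule \<pi>'min)
      moreover have "card P' < card \<pi>'" using P' fpi' by (simp add: psubset_card_mono)
      ultimately show False by simp
    qed
  qed
  define u where "u i = (if i < M' then inv\<^bsub>G\<^esub> g0 \<otimes>\<^bsub>G\<^esub> g i else \<one>\<^bsub>G\<^esub>)" for i
  define v where "v j = (if j < N' then h j \<otimes>\<^bsub>G\<^esub> g0 else \<one>\<^bsub>G\<^esub>)" for j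
  have p1: "0 < M'" "0 < N'" using bM bN by auto
  have p3: "\<And>i. u i \<in> carrier G" using gc g0c by (simp add: u_def)
  have p4: "\<And>j. v j \<in> carrier G" using hc g0c by (simp add: v_def)
  have p5: "u 0 = \<one>\<^bsub>G\<^esub>" using g g0c bM by (simp add: u_def)
  have p6: "v 0 = \<one>\<^bsub>G\<^esub>" using h g0c h0inv bN by (simp add: v_def)
  have p7: "u i \<otimes>\<^bsub>G\<^esub> v j = u i' \<otimes>\<^bsub>G\<^esub> v j'" if "((i, j), i', j') \<in> \<pi>'" for i j i' j'
  proof -
    from that have "((i, j), (i', j')) \<in> \<pi>" using sub' by auto
    then have ij: "i < M'" "j < N'" "i' < M'" "j' < N'" "g i \<otimes>\<^bsub>G\<^esub> h j = g i' \<otimes>\<^bsub>G\<^esub> h j'"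
      by (auto simp: \<pi>_def S_def S_grid_def pr_def)
    have "u i \<otimes>\<^bsub>G\<^esub> v j = inv\<^bsub>G\<^esub> g0 \<otimes>\<^bsub>G\<^esub> (g i \<otimes>\<^bsub>G\<^esub> h j) \<otimes>\<^bsub>G\<^esub> g0"
      using ij(1-4) gc hc g0c by (simp add: u_def v_def G.m_assoc)
    also have "\<dots> = inv\<^bsub>G\<^esub> g0 \<otimes>\<^bsub>G\<^esub> (g i' \<otimes>\<^bsub>G\<^esub> h j') \<otimes>\<^bsub>G\<^esub> g0"
      using ij by simp
    also have "\<dots> = u i' \<otimes>\<^bsub>G\<^esub> v j'"
      using ij(1-4) gc hc g0c by (simp add: u_def v_def G.m_assoc)
    finally show ?thesis .
  qed
  interpret ph: pres_hom M' N' \<pi>' G u v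
    by (rule pres_hom.intro[OF pres.intro[OF p1 \<pi>'SS] pres_hom_axioms.intro[of G u v "\<pi>'", OF grp p3 p4 p5 p6 p7]])
  have Gg: "group (Gamma M' N' \<pi>')" by (rule ph.Gamma_group)
  have uinj: "i = i'" if "i < M'" "i' < M'" "u i = u i'" for i i'
  proof -
    have "g i = g i'" using that gc g0c by (simp add: u_def)
    then show ?thesis using ig that by (auto simp: inj_on_def)
  qed
  have vinj: "j = j'" if "j < N'" "j' < N'" "v j = v j'" for j j'
  proof -
    have "h j = h j'" using that hc g0c by (simp add: v_def)
    then show ?thesis using ih that by (auto simp: inj_on_def)
  qed
  have nd: "nondegenerate M' N' \<pi>'"
    unfolding nondegenerate_def using uinj vinj ph.Fhom_a ph.Fhom_b by metis
  have noinv: "\<not> (\<exists>R C. invariant_subgrid M' N' \<pi>' R C \<and> proper_subgrid M' N' R C)"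
  proof
    assume "\<exists>R C. invariant_subgrid M' N' \<pi>' R C \<and> proper_subgrid M' N' R C"
    then obtain R C where isg: "invariant_subgrid M' N' \<pi>' R C" and prp: "proper_subgrid M' N' R C"
      by blast
    have R0: "0 \<in> R" and RM: "R \<subseteq> {0..<M'}" and C0: "0 \<in> C" and CN: "C \<subseteq> {0..<N'}"
      and cR: "card R \<ge> 2" and cC: "card C \<ge> 2"
      and inv: "\<And>i j i' j'. (i, j) \<in> R \<times> C \<Longrightarrow> ((i, j), (i', j')) \<in> \<pi>' \<Longrightarrow> (i', j') \<in> R \<times> C"
      using isg unfolding invariant_subgrid_def by blast+
    define a' where "a' = (\<lambda>k. if k \<in> g ` R then a k else 0)"
    define b' where "b' = (\<lambda>k. if k \<in> h ` C then b k else 0)"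
    have sa': "supp a' = g ` R" using RM gim by (auto simp: supp_def a'_def)
    have sb': "supp b' = h ` C" using CN him by (auto simp: supp_def b'_def)
    have fR: "finite R" using RM finite_subset by blast
    have fC: "finite C" using CN finite_subset by blast
    have a'G: "a' \<in> group_ring G" using sa' fR RM gc by (auto simp: group_ring_def)
    have b'G: "b' \<in> group_ring G" using sb' fC CN hc by (auto simp: group_ring_def)
    have ra': "gr_rank a' = card R"
      unfolding gr_rank_def sa' using inj_on_subset[OF ig RM] by (rule card_image)
    have rb': "gr_rank b' = card C"
      unfolding gr_rank_def sb' using inj_on_subset[OF ih CN] by (rule card_image)
    have cRM: "card R \<le> M'" using card_mono[OF _ RM] by simp
    have cCN: "card C \<le> N'" using card_mono[OF _ CN] by simp
    have lt: "card R + card C < M' + N'" using prp cRM cCN by (auto simp: proper_subgrid_def)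
    have prod: "gr_mult G a' b' = gr_one G"
    proof
      fix x
      show "gr_mult G a' b' x = gr_one G x"
      proof (cases "x \<in> carrier G")
        case True
        define T where "T = {(i, j). i \<in> R \<and> j \<in> C \<and> pr (i, j) = x}"
        have "gr_mult G a' b' x = (\<Sum>(i, j)\<in>T. r i * s j)"
          unfolding T_def by (rule formula[OF RM CN True a'_def b'_def])
        also have "\<dots> = (if (0, 0) \<in> T then 1 else 0)"
        proof (rule class_sum[OF eq'])
          show "T \<subseteq> S" using RM CN by (auto simp: T_def S_def S_grid_def)
          show "finite S" by (rule fS)
          show "(0, 0) \<in> S" by (rule S00)
          show "q \<in> T" if "p \<in> T" "(p, q) \<in> \<pi>'" for p q
          proof -
            obtain i j where p: "p = (i, j)" by (cases p)
            obtain i' j' where q: "q = (i', j')" by (cases q)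
            have "(i', j') \<in> R \<times> C" using inv[of i j i' j'] that p q by (auto simp: T_def)
            moreover have "pr p = pr q" using that sub' by (auto simp: \<pi>_def)
            ultimately show ?thesis using that p q by (auto simp: T_def)
          qed
          show "(\<Sum>(i, j)\<in>E. r i * s j) = (if (0, 0) \<in> E then 1 else 0)" if "E \<in> S // \<pi>'" for E
            using real' that by (simp add: realizable_with_def S_def)
        qed
        also have "(0, 0) \<in> T \<longleftrightarrow> x = \<one>\<^bsub>G\<^esub>" using R0 C0 pr00 by (auto simp: T_def)
        finally show ?thesis by (simp add: gr_one_def)
      next
        case False
        then have "x \<noteq> \<one>\<^bsub>G\<^esub>" by auto
        then show ?thesis using False by (simp add: gr_mult_def gr_one_def)
      qed
    qed
    show False
      by (rule IH[OF cR _ cC _ lt a'G b'G ra' rb' prod]) (use cRM cCN bM bN in auto)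
  qed
  have "ULIE2 TYPE('k) M' N' \<pi>'"
    using eq' nd minr noinv by (simp add: ULIE2_def is_partition_def S_def)
  then have "(\<exists>i i'. i < i' \<and> i' < M' \<and>
            phi_tor (Gamma M' N' \<pi>') (gen_a M' N' \<pi>' i) = phi_tor (Gamma M' N' \<pi>') (gen_a M' N' \<pi>' i')) \<or>
        (\<exists>j j'. j < j' \<and> j' < N' \<and>
            phi_tor (Gamma M' N' \<pi>') (gen_b M' N' \<pi>' j) = phi_tor (Gamma M' N' \<pi>') (gen_b M' N' \<pi>' j'))"
    using hyp bM bN by blast
  then show False
  proof
    assume "\<exists>i i'. i < i' \<and> i' < M' \<and>
            phi_tor (Gamma M' N' \<pi>') (gen_a M' N' \<pi>' i) = phi_tor (Gamma M' N' \<pi>') (gen_a M' N' \<pi>' i')"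
    then obtain i i' where ii: "i < i'" "i' < M'"
      "phi_tor (Gamma M' N' \<pi>') (gen_a M' N' \<pi>' i) = phi_tor (Gamma M' N' \<pi>') (gen_a M' N' \<pi>' i')" by blast
    then have "ph.Fhom (gen_a M' N' \<pi>' i) = ph.Fhom (gen_a M' N' \<pi>' i')"
      using phi_tor_eq[OF Gg grp tf ph.Fhom_hom] ph.gen_a_car by simp
    then have "u i = u i'" using ii ph.Fhom_a by simp
    then show False using uinj[of i i'] ii by simp
  next
    assume "\<exists>j j'. j < j' \<and> j' < N' \<and>
            phi_tor (Gamma M' N' \<pi>') (gen_b M' N' \<pi>' j) = phi_tor (Gamma M' N' \<pi>') (gen_b M' N' \<pi>' j')"
    then obtain j j' where jj: "j < j'" "j' < N'"
      "phi_tor (Gamma M' N' \<pi>') (gen_b M' N' \<pi>' j) = phi_tor (Gamma M' N' \<pi>') (gen_b M' N' \<pi>' j')" by blast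
    then have "ph.Fhom (gen_b M' N' \<pi>' j) = ph.Fhom (gen_b M' N' \<pi>' j')"
      using phi_tor_eq[OF Gg grp tf ph.Fhom_hom] ph.gen_b_car by simp
    then have "v j = v j'" using jj ph.Fhom_b by simp
    then show False using vinj[of j j'] jj by simp
  qed
qed



theorem theorem6p11:
  fixes M N :: nat
    and G :: "('g, 'm) monoid_scheme"
  assumes "M \<ge> 2" and "N \<ge> 2"
    and hyp: "\<forall>m n P. 2 \<le> m \<and> m \<le> M \<and> 2 \<le> n \<and> n \<le> N \<and> ULIE2 TYPE('k::division_ring) m n P \<longrightarrow>
        (\<exists>i i'. i < i' \<and> i' < m \<and>
            phi_tor (Gamma m n P) (gen_a m n P i) = phi_tor (Gamma m n P) (gen_a m n P i')) \<or>
        (\<exists>j j'. j < j' \<and> j' < n \<and>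
            phi_tor (Gamma m n P) (gen_b m n P j) = phi_tor (Gamma m n P) (gen_b m n P j'))"
    and "group G" and "torsion_free G"
  shows "\<not> (\<exists>a b :: 'g \<Rightarrow> 'k. a \<in> group_ring G \<and> b \<in> group_ring G \<and>
            gr_rank a = M \<and> gr_rank b = N \<and> gr_mult G a b = gr_one G)"
proof -
  have main: "\<forall>M' N'. M' + N' = K \<longrightarrow> 2 \<le> M' \<longrightarrow> M' \<le> M \<longrightarrow> 2 \<le> N' \<longrightarrow> N' \<le> N \<longrightarrow>
      \<not> (\<exists>a b :: 'g \<Rightarrow> 'k. a \<in> group_ring G \<and> b \<in> group_ring G \<and>
            gr_rank a = M' \<and> gr_rank b = N' \<and> gr_mult G a b = gr_one G)" for K
  proof (induction K rule: less_induct)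
    case (less K)
    show ?case
    proof (intro allI impI notI)
      fix M' N' assume KK: "M' + N' = K" and b1: "2 \<le> M'" "M' \<le> M" and b2: "2 \<le> N'" "N' \<le> N"
        and ex: "\<exists>a b :: 'g \<Rightarrow> 'k. a \<in> group_ring G \<and> b \<in> group_ring G \<and>
            gr_rank a = M' \<and> gr_rank b = N' \<and> gr_mult G a b = gr_one G"
      then obtain a b :: "'g \<Rightarrow> 'k" where ab: "a \<in> group_ring G" "b \<in> group_ring G"
        "gr_rank a = M'" "gr_rank b = N'" "gr_mult G a b = gr_one G" by blast
      show False
      proof (rule main_step[OF hyp assms(4,5) b1 b2 ab])
        fix M'' N'' and a' b' :: "'g \<Rightarrow> 'k"
        assume "2 \<le> M''" "M'' \<le> M" "2 \<le> N''" "N'' \<le> N" "M'' + N'' < M' + N'"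
          "a' \<in> group_ring G" "b' \<in> group_ring G" "gr_rank a' = M''" "gr_rank b' = N''"
          "gr_mult G a' b' = gr_one G"
        then show False using less.IH[of "M'' + N''"] KK by blast
      qed
    qed
  qed
  show ?thesis using main[of "M + N"] assms(1,2) by blast
qed

end
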